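(* Let $n$ be an odd integer, and let $a$ and $b$ be distinct positive integers with $a+b=n$. Let $X$ be the circulant graph $X(\mathbb{Z}_{2n}, \{a,-a,b,-b\})$, whose vertex set is $\mathbb{Z}_{2n}$ and in which $u\sim v$ if and only if $v-u\in\{a,-a,b,-b\} \pmod{2n}$; it is a $4$-regular graph. Then the Grover discrete quantum walk on $X$ admits perfect state transfer from vertex $0$ to vertex $n$ at time $2n$, that is, \[U^{2n}\left(\tfrac{1}{2}\, e_0\otimes \mathbf{1}\right) = \tfrac{1}{2}\, e_n\otimes \mathbf{1}.\]
   Context: Let $X$ be a $d$-regular graph on $n$ vertices. Replace each edge $\{u,v\}$ by the two arcs $(u,v)$ and $(v,u)$. The state space is $\mathbb{C}^{nd}$, the space of complex functions on the arcs, with the standard inner product; it is identified with $\mathbb{C}^n\otimes\mathbb{C}^d$, where the arc $(u,v)$ corresponds to the vertex $u$ (its tail) together with one of the $d$ coin directions at $u$. The transition operator is $U=R(I\otimes G)$, where $R$ is the arc-reversal permutation matrix, $(Rf)(u,v)=f(v,u)$, and $G=\frac{2}{d}J-I$ is the $d\times d$ Grover coin ($J$ the all-ones matrix), so that $\big((I\otimes G)f\big)(u,v)=\frac{2}{d}\sum_{w\sim u} f(u,w)-f(u,v)$. For a vertex $u$, $e_u\otimes\mathbf{1}$ denotes the vector that is $1$ on every arc with tail $u$ and $0$ elsewhere, so $\frac{1}{\sqrt d}e_u\otimes\mathbf{1}$ is the uniform superposition over the outgoing arcs of $u$. The graph $X$ admits perfect state transfer from $u$ to $v$ at time $k$ if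 $U^k\left(\frac{1}{\sqrt d}e_u\otimes\mathbf{1}\right)=\frac{1}{\sqrt d}e_v\otimes\mathbf{1}$. *)

theory Defs
  imports Complex_Main
begin

text \<open>Arcs are ordered pairs (u,v) with u,v in V and E u v; a state is a complex
  function on pairs (meaningful on arcs, zero elsewhere).\<close>

definition is_arc :: "'a set \<Rightarrow> ('a \<Rightarrow> 'a \<Rightarrow> bool) \<Rightarrow> 'a \<times> 'a \<Rightarrow> bool" where
  "is_arc V E p \<longleftrightarrow> fst p \<in> V \<and> snd p \<in> V \<and> E (fst p) (snd p)"

definition neighbours :: "'a set \<Rightarrow> ('a \<Rightarrow> 'a \<Rightarrow> bool) \<Rightarrow> 'a \<Rightarrow> 'a set" where
  "neighbours V E u = {w \<in> V. E u w}"

definition regular_graph :: "'a set \<Rightarrow> ('a \<Rightarrow> 'a \<Rightarrow> bool) \<Rightarrow> nat \<Rightarrow> bool" where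
  "regular_graph V E d \<longleftrightarrow> finite V \<and> (\<forall>u v. E u v \<longrightarrow> E v u) \<and> (\<forall>u. \<not> E u u)
     \<and> (\<forall>u\<in>V. card (neighbours V E u) = d)"

definition grover_coin :: "'a set \<Rightarrow> ('a \<Rightarrow> 'a \<Rightarrow> bool) \<Rightarrow> nat \<Rightarrow> ('a \<times> 'a \<Rightarrow> complex) \<Rightarrow> ('a \<times> 'a \<Rightarrow> complex)" where
  "grover_coin V E d f = (\<lambda>(u,v). if is_arc V E (u,v)
      then (2 / of_nat d) * (\<Sum>w\<in>neighbours V E u. f (u,w)) - f (u,v) else 0)"

definition arc_reversal :: "'a set \<Rightarrow> ('a \<Rightarrow> 'a \<Rightarrow> bool) \<Rightarrow> ('a \<times> 'a \<Rightarrow> complex) \<Rightarrow> ('a \<times> 'a \<Rightarrow> complex)" where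
  "arc_reversal V E f = (\<lambda>(u,v). if is_arc V E (u,v) then f (v,u) else 0)"

definition grover_U :: "'a set \<Rightarrow> ('a \<Rightarrow> 'a \<Rightarrow> bool) \<Rightarrow> nat \<Rightarrow> ('a \<times> 'a \<Rightarrow> complex) \<Rightarrow> ('a \<times> 'a \<Rightarrow> complex)" where
  "grover_U V E d f = arc_reversal V E (grover_coin V E d f)"

text \<open>e_u \<otimes> 1: equal to 1 on every arc with tail u and 0 elsewhere.\<close>
definition vertex_all_ones :: "'a set \<Rightarrow> ('a \<Rightarrow> 'a \<Rightarrow> bool) \<Rightarrow> 'a \<Rightarrow> ('a \<times> 'a \<Rightarrow> complex)" where
  "vertex_all_ones V E u = (\<lambda>p. if is_arc V E p \<and> fst p = u then 1 else 0)"

definition perfect_state_transfer :: "'a set \<Rightarrow> ('a \<Rightarrow> 'a \<Rightarrow> bool) \<Rightarrow> nat \<Rightarrow> 'a \<Rightarrow> 'a \<Rightarrow> nat \<Rightarrow> bool" where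
  "perfect_state_transfer V E d u v k \<longleftrightarrow>
     (grover_U V E d ^^ k) (\<lambda>p. (1 / csqrt (of_nat d)) * vertex_all_ones V E u p)
       = (\<lambda>p. (1 / csqrt (of_nat d)) * vertex_all_ones V E v p)"

text \<open>Circulant graph X(Z_m, S): vertices {0..<m} (representatives of Z_m),
  u ~ v iff v - u is congruent mod m to an element of S.\<close>
definition circ_vertices :: "int \<Rightarrow> int set" where
  "circ_vertices m = {0..<m}"

definition circ_adj :: "int \<Rightarrow> int set \<Rightarrow> int \<Rightarrow> int \<Rightarrow> bool" where
  "circ_adj m S u v \<longleftrightarrow> (\<exists>s\<in>S. (v - u) mod m = s mod m)"

end

theory Submission
  imports Defs
begin

definition sg :: "int \<Rightarrow> complex" where "sg x = (if even x then 1 else -1)"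
definition ind :: "bool \<Rightarrow> complex" where "ind P = (if P then 1 else 0)"

lemma dvd_shift: "(n::int) dvd (x + n * y) \<longleftrightarrow> n dvd x"
  by (metis dvd_add_times_triv_right_iff mult.commute)

lemma mod_witness: "w = (x::int) mod m \<Longrightarrow> \<exists>t. w = x + m * t"
  by (rule exI[of _ "- (x div m)"]) (simp add: minus_mult_div_eq_mod[symmetric])

locale pst =
  fixes n a b :: int
  assumes odd_n: "odd n" and apos: "a > 0" and bpos: "b > 0" and aneqb: "a \<noteq> b" and absum: "a + b = n"
begin

abbreviation "V \<equiv> circ_vertices (2*n)"
abbreviation "E \<equiv> circ_adj (2*n) {a, -a, b, -b}"

lemma npos: "n > 0" using apos bpos absum by simp

lemma mod_eq_imp_dvd: "(x::int) mod m = y mod m \<Longrightarrow> m dvd (x - y)"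
  by (simp add: mod_eq_dvd_iff)

lemma not_dvd: "x \<noteq> 0 \<Longrightarrow> \<bar>x\<bar> < 2*n \<Longrightarrow> \<not> (2*n) dvd (x::int)"
proof
  assume "x \<noteq> 0" "\<bar>x\<bar> < 2*n" "(2*n) dvd x"
  then have "\<bar>2*n\<bar> \<le> \<bar>x\<bar>" using dvd_imp_le_int by blast
  then show False using npos \<open>\<bar>x\<bar> < 2*n\<close> by simp
qed

lemma E_iff: "E u v \<longleftrightarrow> (\<exists>s\<in>{a,-a,b,-b}. (v - u) mod (2*n) = s mod (2*n))"
  by (simp add: circ_adj_def)

lemma in_V_eq: "w \<in> V \<Longrightarrow> w mod (2*n) = w"
  by (simp add: circ_vertices_def)

lemma nbr_char: "u \<in> V \<Longrightarrow> (w \<in> V \<and> (w - u) mod (2*n) = s mod (2*n)) \<longleftrightarrow> w = (u + s) mod (2*n)"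
proof
  assume "u \<in> V" "w \<in> V \<and> (w - u) mod (2*n) = s mod (2*n)"
  then show "w = (u + s) mod (2*n)"
    by (metis add.commute diff_add_cancel in_V_eq mod_add_left_eq)
next
  assume "u \<in> V" "w = (u + s) mod (2*n)"
  then show "w \<in> V \<and> (w - u) mod (2*n) = s mod (2*n)"
    using npos by (auto simp: circ_vertices_def mod_diff_left_eq)
qed

lemma nbrs: "u \<in> V \<Longrightarrow> neighbours V E u = {(u+a) mod (2*n), (u-b) mod (2*n), (u-a) mod (2*n), (u+b) mod (2*n)}"
proof -
  assume u: "u \<in> V"
  have "neighbours V E u = (\<lambda>s. (u+s) mod (2*n)) ` {a,-a,b,-b}"
    unfolding neighbours_def E_iff using nbr_char[OF u] by blast
  then show ?thesis by auto
qed

lemma distinct4: "u \<in> V \<Longrightarrow> card {(u+a) mod (2*n), (u-b) mod (2*n), (u-a) mod (2*n), (u+b) mod (2*n)} = 4"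
proof -
  have ne: "(u + s) mod (2*n) \<noteq> (u + t) mod (2*n)" if "s - t \<noteq> 0" "\<bar>s - t\<bar> < 2*n" for s t
  proof
    assume "(u + s) mod (2*n) = (u + t) mod (2*n)"
    then have "(2*n) dvd ((u+s) - (u+t))" by (rule mod_eq_imp_dvd)
    then show False using not_dvd[OF that] by simp
  qed
  have ab: "a < n" "b < n" using apos bpos absum by auto
  show ?thesis
  proof -
    have d1: "(u+a) mod (2*n) \<noteq> (u + -b) mod (2*n)" by (rule ne) (use ab apos bpos absum in auto)
    have d2: "(u+a) mod (2*n) \<noteq> (u + -a) mod (2*n)" by (rule ne) (use ab apos bpos absum in auto)
    have d3: "(u+a) mod (2*n) \<noteq> (u + b) mod (2*n)" by (rule ne) (use ab apos bpos absum aneqb in auto)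
    have d4: "(u + -b) mod (2*n) \<noteq> (u + -a) mod (2*n)" by (rule ne) (use ab apos bpos absum aneqb in auto)
    have d5: "(u + -b) mod (2*n) \<noteq> (u + b) mod (2*n)" by (rule ne) (use ab apos bpos absum in auto)
    have d6: "(u + -a) mod (2*n) \<noteq> (u + b) mod (2*n)" by (rule ne) (use ab apos bpos absum in auto)
    show ?thesis using d1 d2 d3 d4 d5 d6 by (simp only: diff_conv_add_uminus card_insert_if finite.emptyI finite_insert insert_iff empty_iff card.empty) simp
  qed
qed

lemma regular: "regular_graph V E 4"
proof -
  have "finite V" by (simp add: circ_vertices_def)
  moreover have "\<forall>u v. E u v \<longrightarrow> E v u"
  proof (intro allI impI)
    fix u v assume "E u v"
    then obtain s where s: "s \<in> {a,-a,b,-b}" "(v - u) mod (2*n) = s mod (2*n)" by (auto simp: E_iff)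
    have "(u - v) mod (2*n) = (- s) mod (2*n)"
      by (metis s(2) minus_diff_eq mod_minus_eq)
    moreover have "-s \<in> {a,-a,b,-b}" using s(1) by auto
    ultimately show "E v u" by (auto simp: E_iff)
  qed
  moreover have "\<forall>u. \<not> E u u"
  proof
    fix u
    have ab: "a < n" "b < n" using apos bpos absum by auto
    have "\<not> (2*n) dvd s" if "s \<in> {a,-a,b,-b}" for s
      using that not_dvd[of s] ab apos bpos by auto
    then show "\<not> E u u" by (auto simp: E_iff)
  qed
  moreover have "\<forall>u\<in>V. card (neighbours V E u) = 4"
    using nbrs distinct4 by simp
  ultimately show ?thesis by (simp add: regular_graph_def)
qed

lemma arc_iff: "is_arc V E (u,v) \<longleftrightarrow> u \<in> V \<and> (\<exists>s\<in>{a,-a,b,-b}. v = (u + s) mod (2*n))"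
proof
  assume "is_arc V E (u,v)"
  then have u: "u \<in> V" and "v \<in> V" and "\<exists>s\<in>{a,-a,b,-b}. (v - u) mod (2*n) = s mod (2*n)"
    unfolding is_arc_def E_iff by auto
  then obtain s where "s \<in> {a,-a,b,-b}" "v \<in> V \<and> (v - u) mod (2*n) = s mod (2*n)" by blast
  then show "u \<in> V \<and> (\<exists>s\<in>{a,-a,b,-b}. v = (u + s) mod (2*n))" using nbr_char[OF u, of v s] u by blast
next
  assume "u \<in> V \<and> (\<exists>s\<in>{a,-a,b,-b}. v = (u + s) mod (2*n))"
  then obtain s where u: "u \<in> V" and s: "s \<in> {a,-a,b,-b}" "v = (u + s) mod (2*n)" by blast
  then have "v \<in> V \<and> (v - u) mod (2*n) = s mod (2*n)" using nbr_char[OF u, of v s] by blast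
  then show "is_arc V E (u,v)" unfolding is_arc_def E_iff using u s by auto
qed

definition sig :: "nat \<Rightarrow> int \<Rightarrow> int \<Rightarrow> complex" where
  "sig k u v = (if even k then ind (n dvd u) * sg (int (k div 2) + u)
                else ind (n dvd v) * sg (int (k div 2) + v))"

definition Fk :: "nat \<Rightarrow> int \<times> int \<Rightarrow> complex" where
  "Fk k = (\<lambda>(u,v). if is_arc V E (u,v) then (ind (n dvd (u + int k * (v - u))) + sig k u v) / 4 else 0)"

lemma Fk_nb:
  assumes "v \<in> V" "s \<in> {a,-a,b,-b}"
  shows "Fk k (v, (v + s) mod (2*n)) = (ind (n dvd (v + int k * s)) +
     (if even k then ind (n dvd v) * sg (int (k div 2) + v)
      else ind (n dvd (v + s)) * sg (int (k div 2) + v + s))) / 4"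
proof -
  define w where "w = (v + s) mod (2*n)"
  obtain t where t: "w = v + s + (2*n) * t" using mod_witness[OF w_def] by blast
  have arc: "is_arc V E (v, w)" using assms unfolding arc_iff w_def by auto
  have 1: "v + int k * (w - v) = (v + int k * s) + n * (2 * int k * t)" using t by (simp add: algebra_simps)
  have h1: "ind (n dvd (v + int k * (w - v))) = ind (n dvd (v + int k * s))"
    unfolding 1 dvd_shift ..
  have 2: "w = (v + s) + n * (2 * t)" using t by simp
  have h2: "ind (n dvd w) = ind (n dvd (v + s))" by (subst 2) (simp only: dvd_shift)
  have h3: "sg (int (k div 2) + w) = sg (int (k div 2) + v + s)" unfolding t sg_def by (auto simp: algebra_simps)
  show ?thesis
    unfolding w_def[symmetric] Fk_def sig_def using arc h1 h2 h3
    by simp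
qed


lemma dist6:
  assumes "u \<in> V"
  shows "(u+a) mod (2*n) \<noteq> (u-b) mod (2*n)" "(u+a) mod (2*n) \<noteq> (u-a) mod (2*n)"
        "(u+a) mod (2*n) \<noteq> (u+b) mod (2*n)" "(u-b) mod (2*n) \<noteq> (u-a) mod (2*n)"
        "(u-b) mod (2*n) \<noteq> (u+b) mod (2*n)" "(u-a) mod (2*n) \<noteq> (u+b) mod (2*n)"
proof -
  have ne: "(u + s) mod (2*n) \<noteq> (u + t) mod (2*n)" if "s - t \<noteq> 0" "\<bar>s - t\<bar> < 2*n" for s t
  proof
    assume "(u + s) mod (2*n) = (u + t) mod (2*n)"
    then have "(2*n) dvd ((u+s) - (u+t))" by (rule mod_eq_imp_dvd)
    then show False using not_dvd[OF that] by simp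
  qed
  have ab: "a < n" "b < n" using apos bpos absum by auto
  have d1: "(u+a) mod (2*n) \<noteq> (u + -b) mod (2*n)" by (rule ne) (use ab apos bpos absum in auto)
  have d2: "(u+a) mod (2*n) \<noteq> (u + -a) mod (2*n)" by (rule ne) (use ab apos bpos absum in auto)
  have d3: "(u+a) mod (2*n) \<noteq> (u + b) mod (2*n)" by (rule ne) (use ab apos bpos absum aneqb in auto)
  have d4: "(u + -b) mod (2*n) \<noteq> (u + -a) mod (2*n)" by (rule ne) (use ab apos bpos absum aneqb in auto)
  have d5: "(u + -b) mod (2*n) \<noteq> (u + b) mod (2*n)" by (rule ne) (use ab apos bpos absum in auto)
  have d6: "(u + -a) mod (2*n) \<noteq> (u + b) mod (2*n)" by (rule ne) (use ab apos bpos absum in auto)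
  show "(u+a) mod (2*n) \<noteq> (u-b) mod (2*n)" "(u+a) mod (2*n) \<noteq> (u-a) mod (2*n)"
        "(u+a) mod (2*n) \<noteq> (u+b) mod (2*n)" "(u-b) mod (2*n) \<noteq> (u-a) mod (2*n)"
        "(u-b) mod (2*n) \<noteq> (u+b) mod (2*n)" "(u-a) mod (2*n) \<noteq> (u+b) mod (2*n)"
    using d1 d2 d3 d4 d5 d6 by simp_all
qed

lemma sum_nb:
  assumes v: "v \<in> V"
  shows "(\<Sum>w\<in>neighbours V E v. Fk k (v,w)) =
     (2 * (ind (n dvd (v + int k * a)) + ind (n dvd (v - int k * a)))
      + (if even k then 4 * (ind (n dvd v) * sg (int (k div 2) + v)) else 0)) / 4"
proof -
  define j where "j = int (k div 2)"
  define X where "X = ind (n dvd v) * sg (j + v)"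
  have e1: "v + int k * - b = (v + int k * a) + n * (- int k)" by (simp add: absum[symmetric] algebra_simps)
  have e2: "v + int k * b = (v - int k * a) + n * (int k)" by (simp add: absum[symmetric] algebra_simps)
  have e3: "v + - b = (v + a) + n * (-1)" by (simp add: absum[symmetric] algebra_simps)
  have e4: "v + b = (v - a) + n * 1" by (simp add: absum[symmetric] algebra_simps)
  have o1: "sg (j + v + - b) = - sg (j + v + a)"
  proof -
    have "j + v + - b = (j + v + a) - n" using absum by simp
    then show ?thesis using odd_n by (auto simp: sg_def)
  qed
  have o2: "sg (j + v + b) = - sg (j + v - a)"
  proof -
    have "j + v + b = (j + v - a) + n" using absum by simp
    then show ?thesis using odd_n by (auto simp: sg_def)
  qed
  have F1: "Fk k (v, (v+a) mod (2*n)) = (ind (n dvd (v + int k * a)) + (if even k then X else ind (n dvd (v + a)) * sg (j + v + a))) / 4"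
    using Fk_nb[OF v, of a k] by (simp add: X_def j_def)
  have F2: "Fk k (v, (v-b) mod (2*n)) = (ind (n dvd (v + int k * a)) + (if even k then X else - (ind (n dvd (v + a)) * sg (j + v + a)))) / 4"
  proof -
    have "Fk k (v, (v + -b) mod (2*n)) = (ind (n dvd (v + int k * -b)) + (if even k then X else ind (n dvd (v + -b)) * sg (j + v + -b))) / 4"
      using Fk_nb[OF v, of "-b" k] by (simp add: X_def j_def)
    also have "\<dots> = (ind (n dvd (v + int k * a)) + (if even k then X else - (ind (n dvd (v + a)) * sg (j + v + a)))) / 4"
      unfolding o1 by (simp only: e1 e3 dvd_shift) simp
    finally show ?thesis by simp
  qed
  have F3: "Fk k (v, (v-a) mod (2*n)) = (ind (n dvd (v - int k * a)) + (if even k then X else ind (n dvd (v - a)) * sg (j + v - a))) / 4"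
    using Fk_nb[OF v, of "-a" k] by (simp add: X_def j_def)
  have F4: "Fk k (v, (v+b) mod (2*n)) = (ind (n dvd (v - int k * a)) + (if even k then X else - (ind (n dvd (v - a)) * sg (j + v - a)))) / 4"
  proof -
    have "Fk k (v, (v + b) mod (2*n)) = (ind (n dvd (v + int k * b)) + (if even k then X else ind (n dvd (v + b)) * sg (j + v + b))) / 4"
      using Fk_nb[OF v, of "b" k] by (simp add: X_def j_def)
    also have "\<dots> = (ind (n dvd (v - int k * a)) + (if even k then X else - (ind (n dvd (v - a)) * sg (j + v - a)))) / 4"
      unfolding o2 by (simp only: e2 e4 dvd_shift) simp
    finally show ?thesis by simp
  qed
  have "(\<Sum>w\<in>neighbours V E v. Fk k (v,w)) = Fk k (v, (v+a) mod (2*n)) + (Fk k (v, (v-b) mod (2*n)) + (Fk k (v, (v-a) mod (2*n)) + Fk k (v, (v+b) mod (2*n))))"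
    unfolding nbrs[OF v] using dist6[OF v] by simp
  also have "\<dots> = (2 * (ind (n dvd (v + int k * a)) + ind (n dvd (v - int k * a)))
      + (if even k then 4 * X else 0)) / 4"
    unfolding F1 F2 F3 F4 by (simp add: field_simps)
  finally show ?thesis by (simp add: X_def j_def)
qed


lemma ind_sa:
  assumes "s \<in> {a,-a,b,-b}"
  shows "ind (n dvd (x + c * s)) + ind (n dvd (x + c * - s)) = ind (n dvd (x + c * a)) + ind (n dvd (x - c * a))"
proof -
  have eb1: "x + c * b = (x - c * a) + n * c" by (simp add: absum[symmetric] algebra_simps)
  have eb2: "x + c * - b = (x + c * a) + n * (- c)" by (simp add: absum[symmetric] algebra_simps)
  show ?thesis using assms
    by (auto simp only: insert_iff empty_iff eb1 eb2 dvd_shift minus_minus) (simp_all add: algebra_simps)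
qed

lemma step: "grover_U V E 4 (Fk k) = Fk (Suc k)"
proof (rule ext, clarify)
  fix u v
  show "grover_U V E 4 (Fk k) (u,v) = Fk (Suc k) (u,v)"
  proof (cases "is_arc V E (u,v)")
    case False
    then show ?thesis by (simp add: grover_U_def arc_reversal_def Fk_def)
  next
    case True
    then obtain s where u: "u \<in> V" and s: "s \<in> {a,-a,b,-b}" and vdef: "v = (u + s) mod (2*n)"
      unfolding arc_iff by blast
    obtain t where t: "v = u + s + (2*n) * t" using mod_witness[OF vdef] by blast
    have v: "v \<in> V" using vdef npos by (simp add: circ_vertices_def)
    have ms: "-s \<in> {a,-a,b,-b}" using s by auto
    have udef: "u = (v + - s) mod (2*n)"
    proof -
      have "u = u mod (2*n)" using in_V_eq[OF u] by simp
      also have "\<dots> = (v + - s + (2*n) * (- t)) mod (2*n)" using t by (simp add: algebra_simps)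
      also have "\<dots> = (v + - s) mod (2*n)" by (rule mod_mult_self2)
      finally show ?thesis .
    qed
    have arc2: "is_arc V E (v,u)" unfolding arc_iff using v ms udef by blast
    define j where "j = int (k div 2)"
    have G: "grover_U V E 4 (Fk k) (u,v) = (2/4) * (\<Sum>w\<in>neighbours V E v. Fk k (v,w)) - Fk k (v,u)"
      using True arc2 by (simp add: grover_U_def arc_reversal_def grover_coin_def)
    have Fvu: "Fk k (v,u) = (ind (n dvd (v + int k * - s)) +
       (if even k then ind (n dvd v) * sg (j + v) else ind (n dvd u) * sg (j + u))) / 4"
    proof -
      have r1: "v + - s = u + n * (2 * t)" using t by simp
      have r2: "j + v + - s = (j + u) + 2 * (n * t)" using t by simp
      have "Fk k (v,u) = (ind (n dvd (v + int k * - s)) +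
       (if even k then ind (n dvd v) * sg (j + v) else ind (n dvd (v + - s)) * sg (j + v + - s))) / 4"
        using Fk_nb[OF v ms, of k] udef[symmetric] by (simp add: j_def)
      also have "\<dots> = (ind (n dvd (v + int k * - s)) +
       (if even k then ind (n dvd v) * sg (j + v) else ind (n dvd u) * sg (j + u))) / 4"
        unfolding r1 r2 dvd_shift by (simp add: sg_def)
      finally show ?thesis .
    qed
    have Fuv: "Fk (Suc k) (u,v) = (ind (n dvd (v + int k * s)) +
       (if even k then ind (n dvd v) * sg (j + v) else - (ind (n dvd u) * sg (j + u)))) / 4"
    proof -
      have r1: "u + int (Suc k) * s = (v + int k * s) + n * (- 2 * t)" using t by (simp add: algebra_simps)
      have r2: "u + s = v + n * (- 2 * t)" using t by (simp add: algebra_simps)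
      have r3: "int (Suc k div 2) + u + s = (j + v) + 2 * (n * (- t)) + (int (Suc k div 2) - j)" using t by (simp add: algebra_simps)
      have "Fk (Suc k) (u,v) = (ind (n dvd (u + int (Suc k) * s)) +
        (if even (Suc k) then ind (n dvd u) * sg (int (Suc k div 2) + u)
         else ind (n dvd (u + s)) * sg (int (Suc k div 2) + u + s))) / 4"
        using Fk_nb[OF u s, of "Suc k"] vdef[symmetric] by simp
      also have "\<dots> = (ind (n dvd (v + int k * s)) +
       (if even k then ind (n dvd v) * sg (j + v) else - (ind (n dvd u) * sg (j + u)))) / 4"
      proof (cases "even k")
        case True
        then have "Suc k div 2 = k div 2" by presburger
        then show ?thesis using True unfolding r1 r2 r3 dvd_shift by (simp add: j_def sg_def)
      next
        case False
        then have "Suc k div 2 = k div 2 + 1" by presburger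
        then have jj: "int (Suc k div 2) = j + 1" by (simp add: j_def)
        have ev: "even (Suc k)" using False by simp
        have sgs: "sg (j + 1 + u) = - sg (j + u)" by (simp add: sg_def)
        show ?thesis unfolding r1 dvd_shift jj using False ev sgs by simp
      qed
      finally show ?thesis .
    qed
    show ?thesis
      unfolding G Fvu Fuv sum_nb[OF v] j_def[symmetric]
      using ind_sa[OF s, of v "int k"]
      by (simp add: field_simps) (metis add.commute distrib_left)
  qed
qed


lemma iter: "(grover_U V E 4 ^^ k) (Fk 0) = Fk k"
  by (induction k) (simp_all add: step)

lemma dvdV: "u \<in> V \<Longrightarrow> n dvd u \<longleftrightarrow> u = 0 \<or> u = n"
proof
  assume u: "u \<in> V" and "n dvd u"
  then obtain q where q: "u = n * q" by blast
  have h: "0 \<le> n * q" "n * q < 2 * n" using u q by (auto simp: circ_vertices_def)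
  have "0 \<le> q" using h(1) npos by (simp add: zero_le_mult_iff)
  moreover have "q < 2"
  proof (rule ccontr)
    assume "\<not> q < 2"
    then have "n * 2 \<le> n * q" using npos by (intro mult_left_mono) auto
    then show False using h(2) by simp
  qed
  ultimately have "0 \<le> q" "q < 2" by auto
  then have "q = 0 \<or> q = 1" by auto
  then show "u = 0 \<or> u = n" using q by auto
qed auto

lemma csq: "1 / csqrt (of_nat 4) = (1/2 :: complex)"
proof -
  have "csqrt (of_nat 4) = csqrt (of_real 4)" by simp
  also have "\<dots> = of_real (sqrt 4)" by (rule csqrt_of_real) simp
  also have "sqrt 4 = (2::real)" by (simp add: real_sqrt_unique)
  finally show ?thesis by simp
qed

lemma F0: "Fk 0 = (\<lambda>p. (1 / csqrt (of_nat 4)) * vertex_all_ones V E 0 p)"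
proof (rule ext, clarify)
  fix u v
  show "Fk 0 (u,v) = (1 / csqrt (of_nat 4)) * vertex_all_ones V E 0 (u,v)"
  proof (cases "is_arc V E (u,v)")
    case False then show ?thesis by (simp add: Fk_def vertex_all_ones_def)
  next
    case True
    then have u: "u \<in> V" by (simp add: arc_iff)
    have nn: "n \<noteq> 0" using npos by simp
    show ?thesis using True dvdV[OF u] odd_n nn
      by (auto simp: Fk_def vertex_all_ones_def sig_def ind_def sg_def csq)
  qed
qed

lemma Fend: "Fk (nat (2*n)) = (\<lambda>p. (1 / csqrt (of_nat 4)) * vertex_all_ones V E n p)"
proof (rule ext, clarify)
  fix u v
  have k: "int (nat (2*n)) = 2*n" "even (nat (2*n))" "int (nat (2*n) div 2) = n" using npos
    by (simp_all add: even_nat_iff) 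
  have r: "u + 2 * n * (v - u) = u + n * (2 * (v - u))" by simp
  show "Fk (nat (2*n)) (u,v) = (1 / csqrt (of_nat 4)) * vertex_all_ones V E n (u,v)"
  proof (cases "is_arc V E (u,v)")
    case False then show ?thesis by (simp add: Fk_def vertex_all_ones_def)
  next
    case True
    then have u: "u \<in> V" by (simp add: arc_iff)
    have nn: "n \<noteq> 0" using npos by simp
    have ii: "ind (n dvd (u + 2 * n * (v - u))) = ind (n dvd u)" unfolding r dvd_shift ..
    have "Fk (nat (2*n)) (u,v) = (ind (n dvd u) + ind (n dvd u) * sg (n + u)) / 4"
      using True k(2) unfolding Fk_def sig_def by (simp only: case_prod_conv if_True k(1) k(3) ii)
    then show ?thesis using True dvdV[OF u] odd_n nn
      by (auto simp: vertex_all_ones_def ind_def sg_def csq mult.commute)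
  qed
qed

end

theorem mainTheorem1:
  fixes n a b :: int
  assumes "odd n" and "a > 0" and "b > 0" and "a \<noteq> b" and "a + b = n"
  shows "regular_graph (circ_vertices (2*n)) (circ_adj (2*n) {a, -a, b, -b}) 4
       \<and> perfect_state_transfer (circ_vertices (2*n)) (circ_adj (2*n) {a, -a, b, -b}) 4
           0 n (nat (2*n))"
proof -
  interpret pst n a b using assms by unfold_locales
  show ?thesis
    using regular iter[of "nat (2*n)"] F0 Fend
    unfolding perfect_state_transfer_def by simp
qed

end
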